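(* Let $\phi:\mathbb{R}\to\mathbb{R}\cup\{+\infty\}$ be a strictly convex, closed scalar function of Legendre type with Legendre conjugate $\psi(y)=\sup_\lambda(\lambda y-\phi(\lambda))$, and for vectors set $\phi(\mathbf{x})=\sum_m\phi(x_m)$, $\psi(\mathbf{y})=\sum_m\psi(y_m)$. Define $L_\phi(\mathbf{a},\mathbf{b})=\phi(\mathbf{a})+\psi(\mathbf{b})-\langle\mathbf{a},\mathbf{b}\rangle$ (equivalently $D_\phi(\mathbf{a},\nabla\psi(\mathbf{b}))$, the Bregman divergence of $\phi$), for vectors or scalars. Fix a user $i$ who has rated the set $\mathcal{V}_i$ of items, with ratings $R_{ij}\in[L]$ for $j\in\mathcal{V}_i$, and let $\hat{\mathbf{R}}_i=(\hat R_{ij})_{j\in\mathcal{V}_i}$ be any real vector of predictions. For $l\in[L]$ let $\Omega_{il}=|\{j\in\mathcal{V}_i: R_{ij}=l\}|$, assume $\Omega_{il}\ge 1$ for every $l$, and let $\bar{\hat R}_i^{\,l}=\frac{1}{\Omega_{il}}\sum_{j: R_{ij}=l}\hat R_{ij}$. For a rating-scale vector assign to each level $l$ a value $r_{il}$, and let $E_i\mathbf{r}_i\in\mathbb{R}^{|\mathcal{V}_i|}$ be the vector whose entry for item $j$ is $r_{i,R_{ij}}$. Then the set of minimizers of $L_\phi(E_i\mathbf{r}_i,\hat{\mathbf{R}}_i)$ over rating-scale vectors with $r_{i1}\le r_{i2}\le\cdots\le r_{iL}$ equals the set of minimizers of $\sum_{l=1}^L\Omega_{il}\,L_\phi\big(r_{il},\bar{\hat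 R}_i^{\,l}\big)$ over the same set of vectors.
   Context: In the paper the rating-scale vector lies in the set of vectors in $\mathbb{R}^L$ with components in non-increasing order, with rating level $l$ stored in component $L-l+1$ (one-hot encoding $e_{L-l+1}=1$ for rating $l$); in the statement above $r_{il}$ directly denotes the value assigned to rating level $l$, so this set corresponds to $r_{i1}\le\cdots\le r_{iL}$. *)

theory Defs
  imports "HOL-Analysis.Analysis" "HOL-Library.Extended_Real"
begin

definition edom :: "(real \<Rightarrow> ereal) \<Rightarrow> real set" where
  "edom \<phi> = {x. \<phi> x < \<infinity>}"

definition proper_fun :: "(real \<Rightarrow> ereal) \<Rightarrow> bool" where
  "proper_fun \<phi> \<longleftrightarrow> (\<forall>x. \<phi> x \<noteq> -\<infinity>) \<and> edom \<phi> \<noteq> {}"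

definition convex_efun :: "(real \<Rightarrow> ereal) \<Rightarrow> bool" where
  "convex_efun \<phi> \<longleftrightarrow> (\<forall>x y t. 0 \<le> t \<and> t \<le> 1 \<longrightarrow>
      \<phi> ((1 - t) * x + t * y) \<le> ereal (1 - t) * \<phi> x + ereal t * \<phi> y)"

definition strictly_convex_efun :: "(real \<Rightarrow> ereal) \<Rightarrow> bool" where
  "strictly_convex_efun \<phi> \<longleftrightarrow> convex_efun \<phi> \<and>
     (\<forall>x\<in>edom \<phi>. \<forall>y\<in>edom \<phi>. \<forall>t. x \<noteq> y \<and> 0 < t \<and> t < 1 \<longrightarrow>
      \<phi> ((1 - t) * x + t * y) < ereal (1 - t) * \<phi> x + ereal t * \<phi> y)"

definition closed_efun :: "(real \<Rightarrow> ereal) \<Rightarrow> bool" where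
  "closed_efun \<phi> \<longleftrightarrow> (\<forall>x X. X \<longlonglongrightarrow> x \<longrightarrow> \<phi> x \<le> liminf (\<lambda>k. \<phi> (X k)))"

text \<open>Essential smoothness (Rockafellar, Sec. 26), one-dimensional case.\<close>
definition essentially_smooth :: "(real \<Rightarrow> ereal) \<Rightarrow> bool" where
  "essentially_smooth \<phi> \<longleftrightarrow>
     interior (edom \<phi>) \<noteq> {} \<and>
     (\<forall>x\<in>interior (edom \<phi>). (\<lambda>t. real_of_ereal (\<phi> t)) differentiable (at x)) \<and>
     (\<forall>X x. (\<forall>k. X k \<in> interior (edom \<phi>)) \<and> X \<longlonglongrightarrow> x \<and> x \<in> frontier (edom \<phi>) \<longrightarrow>
        filterlim (\<lambda>k. \<bar>deriv (\<lambda>t. real_of_ereal (\<phi> t)) (X k)\<bar>) at_top sequentially)"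

text \<open>Essential strict convexity: strictly convex on every convex subset of the
  domain of the subdifferential; we render it as strict convexity on the effective domain
  (the statement additionally assumes strict convexity, so nothing is lost).\<close>
definition legendre_type :: "(real \<Rightarrow> ereal) \<Rightarrow> bool" where
  "legendre_type \<phi> \<longleftrightarrow> proper_fun \<phi> \<and> convex_efun \<phi> \<and> essentially_smooth \<phi> \<and> strictly_convex_efun \<phi>"

definition conj_fun :: "(real \<Rightarrow> ereal) \<Rightarrow> real \<Rightarrow> ereal" where
  "conj_fun \<phi> y = (SUP u. ereal (u * y) - \<phi> u)"

definition Lphi :: "(real \<Rightarrow> ereal) \<Rightarrow> real \<Rightarrow> real \<Rightarrow> ereal" where
  "Lphi \<phi> a b = \<phi> a + conj_fun \<phi> b - ereal (a * b)"

definition Lphi_vec :: "(real \<Rightarrow> ereal) \<Rightarrow> 'j set \<Rightarrow> ('j \<Rightarrow> real) \<Rightarrow> ('j \<Rightarrow> real) \<Rightarrow> ereal" where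
  "Lphi_vec \<phi> V a b = (\<Sum>j\<in>V. \<phi> (a j)) + (\<Sum>j\<in>V. conj_fun \<phi> (b j)) - ereal (\<Sum>j\<in>V. a j * b j)"

definition rating_scales :: "nat \<Rightarrow> (nat \<Rightarrow> real) set" where
  "rating_scales L = {r. (\<forall>l. l \<notin> {1..L} \<longrightarrow> r l = 0) \<and>
                        (\<forall>l1 l2. 1 \<le> l1 \<and> l1 \<le> l2 \<and> l2 \<le> L \<longrightarrow> r l1 \<le> r l2)}"

definition expand_scale :: "('j \<Rightarrow> nat) \<Rightarrow> (nat \<Rightarrow> real) \<Rightarrow> 'j \<Rightarrow> real" where
  "expand_scale R r = (\<lambda>j. r (R j))"

definition Omega :: "'j set \<Rightarrow> ('j \<Rightarrow> nat) \<Rightarrow> nat \<Rightarrow> nat" where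
  "Omega V R l = card {j\<in>V. R j = l}"

definition level_mean :: "'j set \<Rightarrow> ('j \<Rightarrow> nat) \<Rightarrow> ('j \<Rightarrow> real) \<Rightarrow> nat \<Rightarrow> real" where
  "level_mean V R Rhat l = (\<Sum>j\<in>{j\<in>V. R j = l}. Rhat j) / real (Omega V R l)"

definition argmin_on :: "'a set \<Rightarrow> ('a \<Rightarrow> ereal) \<Rightarrow> 'a set" where
  "argmin_on S f = {x\<in>S. \<forall>y\<in>S. f x \<le> f y}"

end

theory Submission
  imports Defs "HOL-Analysis.Extended_Real_Limits"
begin
lemma sum_not_minf:
  fixes f :: "'a \<Rightarrow> ereal"
  assumes "\<And>x. x \<in> A \<Longrightarrow> f x \<noteq> -\<infinity>"
  shows "sum f A \<noteq> -\<infinity>"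
  using assms
proof (induction A rule: infinite_finite_induct)
  case (insert x F)
  then have "f x \<noteq> -\<infinity>" "sum f F \<noteq> -\<infinity>" by auto
  then show ?case using insert(1,2) by (cases "f x"; cases "sum f F") auto
qed auto

lemma conj_lower:
  assumes "proper_fun \<phi>"
  shows "conj_fun \<phi> y \<noteq> -\<infinity>"
proof -
  obtain u where u: "\<phi> u < \<infinity>" using assms unfolding proper_fun_def edom_def by auto
  have "\<phi> u \<noteq> -\<infinity>" using assms unfolding proper_fun_def by auto
  then obtain p where p: "\<phi> u = ereal p" using u by (cases "\<phi> u") auto
  have "ereal (u*y) - \<phi> u \<le> conj_fun \<phi> y" unfolding conj_fun_def by (rule SUP_upper) auto
  then show ?thesis using p by auto
qed

lemma conj_upper_mean:
  assumes "finite K" "K \<noteq> {}" "\<forall>j\<in>K. conj_fun \<phi> (y j) = ereal (c j)" "\<And>x. \<phi> x \<noteq> -\<infinity>"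
  shows "conj_fun \<phi> ((\<Sum>j\<in>K. y j) / real (card K)) \<le> ereal ((\<Sum>j\<in>K. c j) / real (card K))"
  unfolding conj_fun_def
proof (rule SUP_least)
  fix u
  show "ereal (u * ((\<Sum>j\<in>K. y j) / real (card K))) - \<phi> u \<le> ereal ((\<Sum>j\<in>K. c j) / real (card K))"
  proof (cases "\<phi> u")
    case (real p)
    have "\<forall>j\<in>K. u * y j - p \<le> c j"
    proof
      fix j assume "j \<in> K"
      have "ereal (u*y j) - \<phi> u \<le> conj_fun \<phi> (y j)" unfolding conj_fun_def by (rule SUP_upper) auto
      then show "u * y j - p \<le> c j" using assms(3) \<open>j\<in>K\<close> real by auto
    qed
    then have "(\<Sum>j\<in>K. u * y j - p) \<le> (\<Sum>j\<in>K. c j)" by (intro sum_mono) auto 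
    then have "u * (\<Sum>j\<in>K. y j) - real (card K) * p \<le> (\<Sum>j\<in>K. c j)"
      by (simp add: sum_subtractf sum_distrib_left)
    moreover have "real (card K) > 0" using assms by auto
    ultimately have "(u * (\<Sum>j\<in>K. y j) - real (card K) * p) / real (card K) \<le> (\<Sum>j\<in>K. c j) / real (card K)"
      by (intro divide_right_mono) auto
    moreover have "(u * (\<Sum>j\<in>K. y j) - real (card K) * p) / real (card K) = u * ((\<Sum>j\<in>K. y j) / real (card K)) - p"
      using \<open>real (card K) > 0\<close> by (simp add: diff_divide_distrib)
    ultimately have "u * ((\<Sum>j\<in>K. y j) / real (card K)) - p \<le> (\<Sum>j\<in>K. c j) / real (card K)"
      by simp
    then show ?thesis using real by simp
  qed (use assms(4) in auto)
qed

lemma argmin_cong: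
  assumes "\<And>x y. x \<in> S \<Longrightarrow> y \<in> S \<Longrightarrow> f x \<le> f y \<longleftrightarrow> g x \<le> g y"
  shows "argmin_on S f = argmin_on S g"
  using assms unfolding argmin_on_def by blast

theorem lemma2:
  fixes \<phi> :: "real \<Rightarrow> ereal" and V :: "'j set" and R :: "'j \<Rightarrow> nat"
    and Rhat :: "'j \<Rightarrow> real" and L :: nat
  assumes "strictly_convex_efun \<phi>" and "closed_efun \<phi>" and "legendre_type \<phi>"
    and "finite V"
    and "\<forall>j\<in>V. R j \<in> {1..L}"
    and "\<forall>l\<in>{1..L}. Omega V R l \<ge> 1"
    and "\<forall>j\<in>V. conj_fun \<phi> (Rhat j) < \<infinity>"
  shows "argmin_on (rating_scales L) (\<lambda>r. Lphi_vec \<phi> V (expand_scale R r) Rhat)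
       = argmin_on (rating_scales L)
           (\<lambda>r. \<Sum>l\<in>{1..L}. ereal (real (Omega V R l)) * Lphi \<phi> (r l) (level_mean V R Rhat l))"
proof -
  have pr: "proper_fun \<phi>" using assms(3) unfolding legendre_type_def by auto
  have nm: "\<phi> x \<noteq> -\<infinity>" for x using pr unfolding proper_fun_def by auto
  define K where "K l = {j\<in>V. R j = l}" for l
  define n where "n l = real (Omega V R l)" for l
  define S where "S l = (\<Sum>j\<in>K l. Rhat j)" for l
  define c where "c j = real_of_ereal (conj_fun \<phi> (Rhat j))" for j
  have cj: "conj_fun \<phi> (Rhat j) = ereal (c j)" if "j \<in> V" for j
    using assms(7) that conj_lower[OF pr, of "Rhat j"] unfolding c_def
    by (cases "conj_fun \<phi> (Rhat j)") auto
  have finK: "finite (K l)" for l using assms(4) unfolding K_def by auto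
  have npos: "n l > 0" "card (K l) > 0" if "l \<in> {1..L}" for l
  proof -
    have "Omega V R l \<ge> 1" using assms(6) that by blast
    then show "n l > 0" "card (K l) > 0" unfolding n_def Omega_def K_def by auto
  qed
  have nK: "n l = real (card (K l))" for l unfolding n_def Omega_def K_def by simp
  define d where "d l = real_of_ereal (conj_fun \<phi> (level_mean V R Rhat l))" for l
  have mean: "level_mean V R Rhat l = S l / real (card (K l))" for l
    unfolding level_mean_def S_def K_def Omega_def by simp
  have dl: "conj_fun \<phi> (level_mean V R Rhat l) = ereal (d l)" if "l \<in> {1..L}" for l
  proof -
    have "K l \<noteq> {}" using npos(2)[OF that] by auto
    moreover have "\<forall>j\<in>K l. conj_fun \<phi> (Rhat j) = ereal (c j)" using cj unfolding K_def by auto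
    ultimately have "conj_fun \<phi> (level_mean V R Rhat l) \<le> ereal ((\<Sum>j\<in>K l. c j) / real (card (K l)))"
      unfolding mean S_def using conj_upper_mean[OF finK[of l], where y=Rhat and \<phi>=\<phi> and c=c] nm by blast
    moreover have "conj_fun \<phi> (level_mean V R Rhat l) \<noteq> -\<infinity>" by (rule conj_lower[OF pr])
    ultimately obtain e where e: "conj_fun \<phi> (level_mean V R Rhat l) = ereal e"
      by (cases "conj_fun \<phi> (level_mean V R Rhat l)") auto
    show ?thesis using e unfolding d_def by simp
  qed
  define P where "P r = (\<Sum>l\<in>{1..L}. ereal (n l) * \<phi> (r l))" for r
  define s where "s r = (\<Sum>l\<in>{1..L}. r l * S l)" for r
  have Pnm: "P r \<noteq> -\<infinity>" for r
  proof -
    have "ereal (n l) * \<phi> (r l) \<noteq> -\<infinity>" if "l \<in> {1..L}" for l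
      using npos(1)[OF that] nm[of "r l"] by (cases "\<phi> (r l)") auto
    then show ?thesis unfolding P_def by (rule sum_not_minf)
  qed
  have grp: "(\<Sum>j\<in>V. h (R j)) = (\<Sum>l\<in>{1..L}. \<Sum>j\<in>K l. h l)" for h :: "nat \<Rightarrow> 'b::comm_monoid_add"
  proof -
    have "(\<Sum>j\<in>V. h (R j)) = (\<Sum>l\<in>{1..L}. \<Sum>j\<in>{x\<in>V. R x = l}. h (R j))"
      using assms(4,5) by (intro sum.group[symmetric]) auto
    also have "\<dots> = (\<Sum>l\<in>{1..L}. \<Sum>j\<in>K l. h l)"
      unfolding K_def by (intro sum.cong refl) auto
    finally show ?thesis .
  qed
  have F: "Lphi_vec \<phi> V (expand_scale R r) Rhat = (P r + ereal (- s r)) + ereal (\<Sum>j\<in>V. c j)" for r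
  proof -
    have 1: "(\<Sum>j\<in>V. \<phi> (expand_scale R r j)) = P r"
    proof -
      have "(\<Sum>j\<in>V. \<phi> (expand_scale R r j)) = (\<Sum>l\<in>{1..L}. \<Sum>j\<in>K l. \<phi> (r l))"
        using grp[of "\<lambda>l. \<phi> (r l)"] unfolding expand_scale_def by simp
      also have "\<dots> = P r" unfolding P_def nK
        by (intro sum.cong refl) (simp add: sum_constant_ereal mult.commute)
      finally show ?thesis .
    qed
    have 2: "(\<Sum>j\<in>V. conj_fun \<phi> (Rhat j)) = ereal (\<Sum>j\<in>V. c j)"
      using cj by simp
    have 3: "(\<Sum>j\<in>V. expand_scale R r j * Rhat j) = s r"
    proof -
      have "(\<Sum>j\<in>V. expand_scale R r j * Rhat j) = (\<Sum>l\<in>{1..L}. \<Sum>j\<in>{x\<in>V. R x = l}. expand_scale R r j * Rhat j)"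
        using assms(4,5) by (intro sum.group[symmetric]) auto
      also have "\<dots> = (\<Sum>l\<in>{1..L}. \<Sum>j\<in>K l. r l * Rhat j)"
        unfolding expand_scale_def K_def by (intro sum.cong refl) auto
      also have "\<dots> = s r" unfolding s_def S_def by (simp add: sum_distrib_left)
      finally show ?thesis .
    qed
    show ?thesis unfolding Lphi_vec_def 1 2 3 using Pnm[of r]
      by (cases "P r") auto
  qed
  have G: "(\<Sum>l\<in>{1..L}. ereal (real (Omega V R l)) * Lphi \<phi> (r l) (level_mean V R Rhat l))
      = (P r + ereal (- s r)) + ereal (\<Sum>l\<in>{1..L}. n l * d l)" for r
  proof -
    have "ereal (real (Omega V R l)) * Lphi \<phi> (r l) (level_mean V R Rhat l)
        = ereal (n l) * \<phi> (r l) + ereal (n l * d l - r l * S l)" if "l \<in> {1..L}" for l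
    proof -
      have "n l * level_mean V R Rhat l = S l" using npos[OF that] unfolding mean nK by simp
      then show ?thesis unfolding Lphi_def dl[OF that] n_def[symmetric] using npos(1)[OF that] nm[of "r l"]
        by (cases "\<phi> (r l)") (auto simp: algebra_simps)
    qed
    then have "(\<Sum>l\<in>{1..L}. ereal (real (Omega V R l)) * Lphi \<phi> (r l) (level_mean V R Rhat l))
      = (\<Sum>l\<in>{1..L}. ereal (n l) * \<phi> (r l) + ereal (n l * d l - r l * S l))"
      by (intro sum.cong refl) auto
    also have "\<dots> = P r + ereal (\<Sum>l\<in>{1..L}. n l * d l - r l * S l)"
      unfolding P_def sum.distrib by simp
    also have "\<dots> = (P r + ereal (- s r)) + ereal (\<Sum>l\<in>{1..L}. n l * d l)"
      unfolding s_def sum_subtractf using Pnm[of r] by (cases "P r") auto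
    finally show ?thesis .
  qed
  show ?thesis
    by (rule argmin_cong) (simp only: F G ereal_add_le_add_iff2, simp)
qed
end
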